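(* In the setting below, the map $\bar D\mapsto s_\mathrm{eq}(\bar s,\bar D)$ is differentiable for $\bar D\in(D_{\min},D_{\max})$, it satisfies $\mu(s_\mathrm{eq})=\bar D-G_1(s_\mathrm{eq}-\bar s)$, and $$\frac{\partial s_\mathrm{eq}}{\partial\bar D}(\bar s,\bar D)=\frac{1}{G_1+\mu'(s_\mathrm{eq}(\bar s,\bar D))}.$$ Setting: $s_\mathrm{in}>0$, $0<s_{\min}<s_\mathrm{in}$, $0<D_{\min}<D_{\max}$, $G_1>0$, $\bar s\in[s_{\min},s_\mathrm{in})$; $\mu:[0,s_\mathrm{in}]\to[0,\infty)$ is continuously differentiable with $\mu(0)=0$, $\mu(s)>0$ for $s>0$, $D_{\min}<\mu(s)$ for all $s\in[s_{\min},s_\mathrm{in}]$, $D_{\max}>\mu(s)$ for all $s\in[0,s_\mathrm{in}]$; $G_1>-\min_{[0,s_\mathrm{in}]}\mu'$ and $G_1>-(\mu(s_\mathrm{in})-\bar D)/(s_\mathrm{in}-\bar s)$ for all considered $\bar D$.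
   Context: $s_\mathrm{eq}(\bar s,\bar D)=\lim_{t\to\infty}s(t)$, where $(s,b)$ solves $\dot s=-\mu(s)b+D(s_\mathrm{in}-s)$, $\dot b=\mu(s)b-Db$ with $D=\operatorname{sat}_{[D_{\min},D_{\max}]}(\bar D-G_1(s-\bar s))$ from any initial condition in $[0,s_\mathrm{in})\times(0,\infty)$. The saturation function is $\operatorname{sat}_{[D_{\min},D_{\max}]}(x)=D_{\max}$ if $x>D_{\max}$, $=x$ if $x\in[D_{\min},D_{\max}]$, $=D_{\min}$ if $x<D_{\min}$. *)

theory Defs
  imports "HOL-Analysis.Analysis"
begin

definition sat :: "real \<Rightarrow> real \<Rightarrow> real \<Rightarrow> real" where
  "sat Dmin Dmax x = (if x > Dmax then Dmax else if x < Dmin then Dmin else x)"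

definition dil :: "real \<Rightarrow> real \<Rightarrow> real \<Rightarrow> real \<Rightarrow> real \<Rightarrow> real \<Rightarrow> real" where
  "dil Dmin Dmax G1 sbar Dbar s = sat Dmin Dmax (Dbar - G1 * (s - sbar))"

definition closed_loop_sol ::
  "real \<Rightarrow> (real \<Rightarrow> real) \<Rightarrow> real \<Rightarrow> real \<Rightarrow> real \<Rightarrow> real \<Rightarrow> real
   \<Rightarrow> (real \<Rightarrow> real) \<Rightarrow> (real \<Rightarrow> real) \<Rightarrow> bool" where
  "closed_loop_sol s_in mu Dmin Dmax G1 sbar Dbar s b \<longleftrightarrow>
     s 0 \<in> {0..<s_in} \<and> b 0 > 0 \<and>
     (\<forall>t\<ge>0. (s has_real_derivative
                 (- mu (s t) * b t + dil Dmin Dmax G1 sbar Dbar (s t) * (s_in - s t))) (at t within {0..})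
            \<and> (b has_real_derivative
                 (mu (s t) * b t - dil Dmin Dmax G1 sbar Dbar (s t) * b t)) (at t within {0..}))"

definition s_eq ::
  "real \<Rightarrow> (real \<Rightarrow> real) \<Rightarrow> real \<Rightarrow> real \<Rightarrow> real \<Rightarrow> real \<Rightarrow> real \<Rightarrow> real" where
  "s_eq s_in mu Dmin Dmax G1 sbar Dbar =
     (THE L. \<forall>s b. closed_loop_sol s_in mu Dmin Dmax G1 sbar Dbar s b \<longrightarrow> (s \<longlongrightarrow> L) at_top)"

end

theory Submission
  imports Defs "HOL-Real_Asymp.Real_Asymp"
begin


lemma real_induct_from:
  fixes P :: "real \<Rightarrow> bool"
  assumes P0: "P c"
    and step: "\<And>t. t \<ge> c \<Longrightarrow> P t \<Longrightarrow> \<exists>d>0. \<forall>u. t < u \<and> u < t + d \<longrightarrow> P u"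
    and lim: "\<And>t. t > c \<Longrightarrow> (\<forall>u. c \<le> u \<and> u < t \<longrightarrow> P u) \<Longrightarrow> P t"
    and t: "t \<ge> c"
  shows "P t"
proof (rule ccontr)
  assume nP: "\<not> P t"
  define S where "S = {t. c \<le> t \<and> \<not> P t}"
  have Sne: "S \<noteq> {}" using nP t by (auto simp: S_def)
  have bdd: "bdd_below S" unfolding S_def by (rule bdd_belowI[of _ c]) auto
  define i where "i = Inf S"
  have ci: "c \<le> i" unfolding i_def by (rule cInf_greatest[OF Sne]) (auto simp: S_def)
  have below: "\<forall>u. c \<le> u \<and> u < i \<longrightarrow> P u"
  proof (intro allI impI)
    fix u assume u: "c \<le> u \<and> u < i"
    show "P u"
    proof (rule ccontr)
      assume "\<not> P u" then have "u \<in> S" using u by (auto simp: S_def)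
      then have "i \<le> u" unfolding i_def by (rule cInf_lower[OF _ bdd])
      with u show False by auto
    qed
  qed
  have Pi: "P i"
  proof (cases "i = c")
    case True then show ?thesis using P0 by simp
  next
    case False then have "i > c" using ci by auto
    then show ?thesis using lim below by blast
  qed
  obtain d where d: "d > 0" "\<forall>u. i < u \<and> u < i + d \<longrightarrow> P u" using step[OF ci Pi] by blast
  have "i + d \<le> Inf S"
  proof (rule cInf_greatest[OF Sne])
    fix x assume x: "x \<in> S"
    then have "i \<le> x" unfolding i_def by (rule cInf_lower[OF _ bdd])
    moreover have "\<not> P x" using x by (auto simp: S_def)
    ultimately show "i + d \<le> x" using d Pi by (cases "x = i") force+
  qed
  with d show False by (simp add: i_def)
qed

lemma cont_left_ge:
  fixes f :: "real \<Rightarrow> real"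
  assumes cont: "continuous_on {c..} f" and t: "t > c"
    and ge: "\<forall>u. c \<le> u \<and> u < t \<longrightarrow> f u \<ge> k"
  shows "f t \<ge> k"
proof (rule ccontr)
  assume "\<not> f t \<ge> k"
  then have e: "k - f t > 0" by simp
  from cont t have "\<exists>d>0. \<forall>x'\<in>{c..}. dist x' t < d \<longrightarrow> dist (f x') (f t) < k - f t"
    unfolding continuous_on_iff using e by auto
  then obtain d where d: "d > 0" "\<forall>x'\<in>{c..}. dist x' t < d \<longrightarrow> dist (f x') (f t) < k - f t" by blast
  define u where "u = max c (t - d/2)"
  have u: "c \<le> u" "u < t" "dist u t < d" using d t by (auto simp: u_def dist_real_def)
  then have "dist (f u) (f t) < k - f t" using d by auto
  moreover have "f u \<ge> k" using ge u by auto
  ultimately show False by (auto simp: dist_real_def)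
qed

lemma cont_left_le:
  fixes f :: "real \<Rightarrow> real"
  assumes cont: "continuous_on {c..} f" and t: "t > c"
    and le: "\<forall>u. c \<le> u \<and> u < t \<longrightarrow> f u \<le> k"
  shows "f t \<le> k"
  using cont_left_ge[of c "\<lambda>x. - f x" t "-k"] assms by (auto intro: continuous_intros)

lemma cont_right_nbhd:
  fixes f :: "real \<Rightarrow> real"
  assumes cont: "continuous_on {c..} f" and t: "t \<ge> c" and e: "e > 0"
  shows "\<exists>d>0. \<forall>u. t < u \<and> u < t + d \<longrightarrow> \<bar>f u - f t\<bar> < e"
proof -
  from cont t e obtain d where d: "d > 0" "\<forall>x'\<in>{c..}. dist x' t < d \<longrightarrow> dist (f x') (f t) < e"
    unfolding continuous_on_iff by force
  show ?thesis using d t by (intro exI[of _ d]) (auto simp: dist_real_def)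
qed

lemma barrier_upper:
  fixes f f' :: "real \<Rightarrow> real"
  assumes cont: "continuous_on {c..} f"
    and der: "\<And>t. t > c \<Longrightarrow> (f has_real_derivative f' t) (at t)"
    and start: "f c < a"
    and cross: "\<And>t. t > c \<Longrightarrow> f t = a \<Longrightarrow> f' t < 0"
    and t: "t \<ge> c"
  shows "f t < a"
proof (rule real_induct_from[where P = "\<lambda>t. f t < a" and c = c, OF start _ _ t])
  fix t assume t: "t \<ge> c" "f t < a"
  from cont_right_nbhd[OF cont t(1), of "a - f t"] t show "\<exists>d>0. \<forall>u. t < u \<and> u < t + d \<longrightarrow> f u < a"
    by (auto) (metis abs_less_iff add.commute diff_add_cancel less_diff_eq)
next
  fix t assume t: "t > c" and bel: "\<forall>u. c \<le> u \<and> u < t \<longrightarrow> f u < a"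
  have le: "f t \<le> a" using cont_left_le[OF cont t, of a] bel by (meson less_imp_le)
  show "f t < a"
  proof (rule ccontr)
    assume "\<not> f t < a" then have eq: "f t = a" using le by simp
    have "f' t < 0" using cross[OF t eq] .
    from DERIV_neg_dec_left[OF der[OF t] this] obtain d where
      d: "d > 0" "\<forall>h>0. h < d \<longrightarrow> f t < f (t - h)" by blast
    define h where "h = min d (t - c) / 2"
    have h: "h > 0" "h < d" "c \<le> t - h" "t - h < t" using d t by (auto simp: h_def min_def field_simps)
    then have "f (t - h) < a" using bel by auto
    moreover have "f t < f (t - h)" using d h by auto
    ultimately show False using eq by simp
  qed
qed

lemma barrier_lower:
  fixes f f' :: "real \<Rightarrow> real"
  assumes cont: "continuous_on {c..} f"
    and der: "\<And>t. t > c \<Longrightarrow> (f has_real_derivative f' t) (at t)"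
    and start: "f c > a"
    and cross: "\<And>t. t > c \<Longrightarrow> f t = a \<Longrightarrow> f' t > 0"
    and t: "t \<ge> c"
  shows "f t > a"
proof -
  have "- f t < - a"
    by (rule barrier_upper[where f = "\<lambda>t. - f t" and f' = "\<lambda>t. - f' t" and c = c])
       (use assms in \<open>auto intro: continuous_intros derivative_intros\<close>)
  then show ?thesis by simp
qed

lemma linear_growth:
  fixes f f' :: "real \<Rightarrow> real"
  assumes cont: "continuous_on {a..b} f" and ab: "a \<le> b"
    and der: "\<And>t. a < t \<Longrightarrow> t < b \<Longrightarrow> (f has_real_derivative f' t) (at t)"
    and k: "\<And>t. a < t \<Longrightarrow> t < b \<Longrightarrow> f' t \<ge> k"
  shows "f b \<ge> f a + k * (b - a)"
proof -
  have "(\<lambda>t. f t - k * t) a \<le> (\<lambda>t. f t - k * t) b"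
  proof (rule DERIV_nonneg_imp_increasing_open[OF ab])
    fix x assume x: "a < x" "x < b"
    show "\<exists>y. ((\<lambda>t. f t - k * t) has_real_derivative y) (at x) \<and> y \<ge> 0"
      using der[OF x] k[OF x] by (intro exI[of _ "f' x - k"]) (auto intro!: derivative_eq_intros)
  next
    show "continuous_on {a..b} (\<lambda>t. f t - k * t)" using cont by (intro continuous_intros)
  qed
  then show ?thesis by (simp add: algebra_simps)
qed



lemma within_ge0_at:
  assumes "(f has_real_derivative y) (at t within {0..})" "t > (0::real)"
  shows "(f has_real_derivative y) (at t)"
proof -
  have "t \<in> interior {0::real..}" using assms(2) by (simp add: interior_real_atLeast)
  then have "at t within {0..} = at t" by (rule at_within_interior)
  then show ?thesis using assms(1) by metis
qed

lemma right_from_h: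
  assumes "\<exists>d>0. \<forall>h>0. (t::real) + h \<in> {0..} \<longrightarrow> h < d \<longrightarrow> Q (t + h)" "t \<ge> 0"
  shows "\<exists>d>0. \<forall>u. t < u \<and> u < t + d \<longrightarrow> Q u"
proof -
  obtain d where d: "d > 0" "\<forall>h>0. t + h \<in> {0..} \<longrightarrow> h < d \<longrightarrow> Q (t + h)" using assms(1) by blast
  show ?thesis
  proof (intro exI[of _ d] conjI allI impI)
    fix u assume u: "t < u \<and> u < t + d"
    have "Q (t + (u - t))" using d(2)[rule_format, of "u - t"] u assms(2) by auto
    then show "Q u" by simp
  qed (use d in auto)
qed

lemma convergence:
  fixes s_in Dmin Dmax sstar :: real and mu Df s b :: "real \<Rightarrow> real"
  assumes s_in: "s_in > 0" and Dmin: "Dmin > 0" "Dmin \<le> Dmax"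
   and mu_cont: "continuous_on {0..s_in} mu"
   and mu0: "mu 0 = 0" and mu_nn: "\<And>x. x\<in>{0..s_in} \<Longrightarrow> 0 \<le> mu x"
   and mu_le: "\<And>x. x\<in>{0..s_in} \<Longrightarrow> mu x \<le> Dmax"
   and mu_sin: "mu s_in > 0"
   and Df_cont: "continuous_on UNIV Df"
   and Df_lb: "\<And>x. Dmin \<le> Df x" and Df_ub: "\<And>x. Df x \<le> Dmax"
   and sstar: "0 < sstar" "sstar < s_in"
   and below: "\<And>x. 0 \<le> x \<Longrightarrow> x < sstar \<Longrightarrow> mu x < Df x"
   and above: "\<And>x. sstar < x \<Longrightarrow> x \<le> s_in \<Longrightarrow> Df x < mu x"
   and s0: "0 \<le> s 0" "s 0 < s_in" and b0: "b 0 > 0"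
   and ds: "\<And>t. t \<ge> 0 \<Longrightarrow> (s has_real_derivative (- mu (s t) * b t + Df (s t) * (s_in - s t))) (at t within {0..})"
   and db: "\<And>t. t \<ge> 0 \<Longrightarrow> (b has_real_derivative (mu (s t) * b t - Df (s t) * b t)) (at t within {0..})"
  shows "(s \<longlongrightarrow> sstar) at_top"
proof -
  define F where "F t = - mu (s t) * b t + Df (s t) * (s_in - s t)" for t
  define G where "G t = mu (s t) * b t - Df (s t) * b t" for t
  have dsw: "\<And>t. t \<ge> 0 \<Longrightarrow> (s has_real_derivative F t) (at t within {0..})" unfolding F_def by (rule ds)
  have dbw: "\<And>t. t \<ge> 0 \<Longrightarrow> (b has_real_derivative G t) (at t within {0..})" unfolding G_def by (rule db)
  have dsa: "\<And>t. t > 0 \<Longrightarrow> (s has_real_derivative F t) (at t)" by (rule within_ge0_at[OF dsw]) auto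
  have dba: "\<And>t. t > 0 \<Longrightarrow> (b has_real_derivative G t) (at t)" by (rule within_ge0_at[OF dbw]) auto
  have cs: "continuous_on {0..} s" by (rule DERIV_continuous_on[where D=F]) (rule dsw, simp)
  have cb: "continuous_on {0..} b" by (rule DERIV_continuous_on[where D=G]) (rule dbw, simp)
  have Dmax: "Dmax > 0" using Dmin by simp

  have inv: "0 \<le> s t \<and> s t \<le> s_in \<and> b t > 0" if t: "t \<ge> 0" for t
  proof (rule real_induct_from[where P = "\<lambda>t. 0 \<le> s t \<and> s t \<le> s_in \<and> b t > 0" and c = 0, OF _ _ _ t])
    show "0 \<le> s 0 \<and> s 0 \<le> s_in \<and> 0 < b 0" using s0 b0 by simp
  next
    fix t :: real assume t: "t \<ge> 0" and P: "0 \<le> s t \<and> s t \<le> s_in \<and> 0 < b t"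
    obtain d1 where d1: "d1 > 0" "\<forall>u. t < u \<and> u < t + d1 \<longrightarrow> b u > 0"
    proof -
      from cont_right_nbhd[OF cb t, of "b t"] P obtain d where
        d: "d > 0" "\<forall>u. t < u \<and> u < t + d \<longrightarrow> \<bar>b u - b t\<bar> < b t" by auto
      have "\<forall>u. t < u \<and> u < t + d \<longrightarrow> b u > 0"
      proof (intro allI impI)
        fix u assume "t < u \<and> u < t + d"
        then have "\<bar>b u - b t\<bar> < b t" using d by blast
        then show "b u > 0" by (simp add: abs_less_iff)
      qed
      then show ?thesis using that d(1) by blast
    qed
    obtain d2 where d2: "d2 > 0" "\<forall>u. t < u \<and> u < t + d2 \<longrightarrow> s u \<ge> 0"
    proof (cases "s t > 0")
      case True
      from cont_right_nbhd[OF cs t, of "s t"] True obtain d where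
        d: "d > 0" "\<forall>u. t < u \<and> u < t + d \<longrightarrow> \<bar>s u - s t\<bar> < s t" by auto
      have "\<forall>u. t < u \<and> u < t + d \<longrightarrow> s u \<ge> 0"
      proof (intro allI impI)
        fix u assume "t < u \<and> u < t + d"
        then have "\<bar>s u - s t\<bar> < s t" using d by blast
        then show "s u \<ge> 0" by (simp add: abs_less_iff)
      qed
      then show ?thesis using that d(1) by blast
    next
      case False
      then have st: "s t = 0" using P by simp
      have "F t > 0" using st mu0 Df_lb[of 0] Dmin s_in by (simp add: F_def)
      from right_from_h[where Q = "\<lambda>y. s t < s y", OF has_real_derivative_pos_inc_right[OF dsw[OF t] this] t]
      obtain d where d: "d > 0" "\<forall>u. t < u \<and> u < t + d \<longrightarrow> s t < s u" by blast
      have "\<forall>u. t < u \<and> u < t + d \<longrightarrow> s u \<ge> 0" using d(2) st by auto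
      then show ?thesis using that d(1) by blast
    qed
    obtain d3 where d3: "d3 > 0" "\<forall>u. t < u \<and> u < t + d3 \<longrightarrow> s u \<le> s_in"
    proof (cases "s t < s_in")
      case True
      from cont_right_nbhd[OF cs t, of "s_in - s t"] True obtain d where
        d: "d > 0" "\<forall>u. t < u \<and> u < t + d \<longrightarrow> \<bar>s u - s t\<bar> < s_in - s t" by auto
      have "\<forall>u. t < u \<and> u < t + d \<longrightarrow> s u \<le> s_in"
      proof (intro allI impI)
        fix u assume "t < u \<and> u < t + d"
        then have "\<bar>s u - s t\<bar> < s_in - s t" using d by blast
        then show "s u \<le> s_in" by (simp add: abs_less_iff)
      qed
      then show ?thesis using that d(1) by blast
    next
      case False
      then have st: "s t = s_in" using P by simp
      have "F t < 0" using st mu_sin P by (simp add: F_def)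
      from right_from_h[where Q = "\<lambda>y. s t > s y", OF has_real_derivative_neg_dec_right[OF dsw[OF t] this] t]
      obtain d where d: "d > 0" "\<forall>u. t < u \<and> u < t + d \<longrightarrow> s t > s u" by blast
      have "\<forall>u. t < u \<and> u < t + d \<longrightarrow> s u \<le> s_in" using d(2) st by auto
      then show ?thesis using that d(1) by blast
    qed
    show "\<exists>d>0. \<forall>u. t < u \<and> u < t + d \<longrightarrow> 0 \<le> s u \<and> s u \<le> s_in \<and> 0 < b u"
      using d1 d2 d3 by (intro exI[of _ "min d1 (min d2 d3)"]) auto
  next
    fix t :: real assume t: "t > 0" and bel: "\<forall>u. 0 \<le> u \<and> u < t \<longrightarrow> 0 \<le> s u \<and> s u \<le> s_in \<and> 0 < b u"
    have s1: "s t \<ge> 0" using cont_left_ge[OF cs t, of 0] bel by auto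
    have s2: "s t \<le> s_in" using cont_left_le[OF cs t, of s_in] bel by auto
    have "(\<lambda>r. b r * exp (Dmax * r)) 0 \<le> (\<lambda>r. b r * exp (Dmax * r)) t"
    proof (rule DERIV_nonneg_imp_increasing_open[where f="\<lambda>r. b r * exp (Dmax * r)" and a=0 and b=t])
      show "0 \<le> t" using t by simp
    next
      fix x assume x: "0 < x" "x < t"
      have Px: "0 \<le> s x \<and> s x \<le> s_in \<and> 0 < b x" using bel x by auto
      have "mu (s x) \<ge> 0" using mu_nn Px by auto
      moreover have "Df (s x) \<le> Dmax" by (rule Df_ub)
      ultimately have "(mu (s x) - Df (s x) + Dmax) * b x * exp (Dmax * x) \<ge> 0" using Px by simp
      moreover have "((\<lambda>r. b r * exp (Dmax * r)) has_real_derivative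
           (mu (s x) - Df (s x) + Dmax) * b x * exp (Dmax * x)) (at x)"
        using dba[OF x(1)] by (auto intro!: derivative_eq_intros simp: G_def algebra_simps)
      ultimately show "\<exists>y. ((\<lambda>r. b r * exp (Dmax * r)) has_real_derivative y) (at x) \<and> 0 \<le> y" by blast
    next
      show "continuous_on {0..t} (\<lambda>r. b r * exp (Dmax * r))"
        by (intro continuous_intros continuous_on_subset[OF cb]) auto
    qed
    then have "b t * exp (Dmax * t) > 0" using b0 by simp
    then have "b t > 0" by (simp add: zero_less_mult_iff)
    then show "0 \<le> s t \<and> s t \<le> s_in \<and> 0 < b t" using s1 s2 by simp
  qed
  define w where "w t = s t + b t - s_in" for t
  have FG: "F x + G x = - Df (s x) * w x" for x by (simp add: F_def G_def w_def algebra_simps)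
  have hw: "(w t)^2 \<le> (w 0)^2 * exp (-2*Dmin*t)" if t: "t \<ge> 0" for t
  proof -
    have "(\<lambda>r. - ((w r)^2) * exp (2*Dmin*r)) 0 \<le> (\<lambda>r. - ((w r)^2) * exp (2*Dmin*r)) t"
    proof (rule DERIV_nonneg_imp_increasing_open[where f="\<lambda>r. - ((w r)^2) * exp (2*Dmin*r)" and a=0 and b=t])
      show "0 \<le> t" using t by simp
    next
      fix x assume x: "0 < x" "x < t"
      have dw: "(w has_real_derivative F x + G x) (at x)"
        unfolding w_def[abs_def] using dsa[OF x(1)] dba[OF x(1)] by (auto intro!: derivative_eq_intros)
      have d: "((\<lambda>r. - ((w r)^2) * exp (2*Dmin*r)) has_real_derivative
          (- (2 * w x * (F x + G x)) * exp (2*Dmin*x) + - ((w x)^2) * (exp (2*Dmin*x) * (2*Dmin)))) (at x)"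
        using dw by (auto intro!: derivative_eq_intros)
      have e: "(- (2 * w x * (F x + G x)) * exp (2*Dmin*x) + - ((w x)^2) * (exp (2*Dmin*x) * (2*Dmin)))
             = 2 * (w x)^2 * exp (2*Dmin*x) * (Df (s x) - Dmin)"
        unfolding FG by (simp add: algebra_simps power2_eq_square)
      have "2 * (w x)^2 * exp (2*Dmin*x) * (Df (s x) - Dmin) \<ge> 0" using Df_lb[of "s x"] by simp
      then show "\<exists>y. ((\<lambda>r. - ((w r)^2) * exp (2*Dmin*r)) has_real_derivative y) (at x) \<and> 0 \<le> y"
        using d e by metis
    next
      have cw: "continuous_on {0..} w" unfolding w_def[abs_def] using cs cb by (intro continuous_intros)
      show "continuous_on {0..t} (\<lambda>r. - ((w r)^2) * exp (2*Dmin*r))"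
        by (intro continuous_intros continuous_on_subset[OF cw]) auto
    qed
    then have "(w t)^2 * exp (2*Dmin*t) \<le> (w 0)^2" by simp
    then have le: "(w t)^2 * exp (2*Dmin*t) * exp (-2*Dmin*t) \<le> (w 0)^2 * exp (-2*Dmin*t)"
      by (rule mult_right_mono) simp
    have "exp (2*Dmin*t) * exp (-2*Dmin*t) = 1" by (simp add: exp_add[symmetric])
    then have "(w t)^2 * exp (2*Dmin*t) * exp (-2*Dmin*t) = (w t)^2" by (simp add: mult.assoc)
    then show ?thesis using le by linarith
  qed
  have small: "\<exists>T\<ge>1. \<forall>t\<ge>T. \<bar>w t\<bar> < \<eta>" if eta: "\<eta> > 0" for \<eta>
  proof -
    have "((\<lambda>t. (w 0)^2 * exp (-2*Dmin*t)) \<longlongrightarrow> 0) at_top" using Dmin by real_asymp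
    then have "eventually (\<lambda>t. (w 0)^2 * exp (-2*Dmin*t) < \<eta>^2) at_top"
      by (rule order_tendstoD) (use eta in simp)
    then obtain N where N: "\<forall>t\<ge>N. (w 0)^2 * exp (-2*Dmin*t) < \<eta>^2" by (auto simp: eventually_at_top_linorder)
    show ?thesis
    proof (intro exI[of _ "max N 1"] conjI allI impI)
      fix t assume t: "max N 1 \<le> t"
      have "(w t)^2 < \<eta>^2" using hw[of t] N t by force
      then have "\<bar>w t\<bar>^2 < \<eta>^2" by simp
      then show "\<bar>w t\<bar> < \<eta>" using eta by (meson abs_ge_zero less_imp_le power_less_imp_less_base)
    qed simp
  qed
  have Fw: "F t = (Df (s t) - mu (s t)) * (s_in - s t) - mu (s t) * w t" for t
    by (simp add: F_def w_def algebra_simps)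
  have muw: "mu (s t) * w t \<le> Dmax * \<bar>w t\<bar>" "- (mu (s t) * w t) \<le> Dmax * \<bar>w t\<bar>" if t: "t \<ge> 0" for t
  proof -
    have m: "0 \<le> mu (s t)" "mu (s t) \<le> Dmax" using inv[OF t] mu_nn mu_le by auto
    have "mu (s t) * w t \<le> mu (s t) * \<bar>w t\<bar>" using m by (intro mult_left_mono) auto
    also have "\<dots> \<le> Dmax * \<bar>w t\<bar>" using m by (intro mult_right_mono) auto
    finally show "mu (s t) * w t \<le> Dmax * \<bar>w t\<bar>" .
    have "- (mu (s t) * w t) \<le> mu (s t) * \<bar>w t\<bar>" using mult_left_mono[of "- w t" "\<bar>w t\<bar>" "mu (s t)"] m by simp
    also have "\<dots> \<le> Dmax * \<bar>w t\<bar>" using m by (intro mult_right_mono) auto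
    finally show "- (mu (s t) * w t) \<le> Dmax * \<bar>w t\<bar>" .
  qed
  have smallD: "Dmax * \<bar>w t\<bar> < C" if "\<bar>w t\<bar> < C / Dmax" for t C
    using that Dmax by (simp add: field_simps)

  have conv_eps: "\<exists>T. \<forall>t\<ge>T. \<bar>s t - sstar\<bar> < \<epsilon>"
    if eps: "\<epsilon> > 0" "\<epsilon> < sstar" "\<epsilon> < s_in - sstar" for \<epsilon>
  proof -
    have c1: "continuous_on {0..sstar-\<epsilon>} (\<lambda>x. Df x - mu x)"
      using eps sstar by (intro continuous_intros continuous_on_subset[OF Df_cont] continuous_on_subset[OF mu_cont]) auto
    obtain x1 where x1: "x1 \<in> {0..sstar-\<epsilon>}" "\<forall>y\<in>{0..sstar-\<epsilon>}. Df x1 - mu x1 \<le> Df y - mu y"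
      using continuous_attains_inf[OF compact_Icc _ c1] eps by auto
    define m1 where "m1 = Df x1 - mu x1"
    have m1: "m1 > 0" using below[of x1] x1 eps by (auto simp: m1_def)
    define A where "A = m1 * (s_in - sstar)"
    have A: "A > 0" using m1 sstar by (simp add: A_def)
    obtain T1 where T1: "T1 \<ge> 1" "\<forall>t\<ge>T1. \<bar>w t\<bar> < (A/2) / Dmax" using small[of "(A/2)/Dmax"] A Dmax by auto
    have key1: "F t > A/2" if t: "t \<ge> T1" "s t \<le> sstar - \<epsilon>" for t
    proof -
      have t0: "t \<ge> 0" using t T1 by simp
      have st: "s t \<in> {0..sstar-\<epsilon>}" using inv[OF t0] t by auto
      have "m1 \<le> Df (s t) - mu (s t)" using x1 st by (auto simp: m1_def)
      then have "m1 * (s_in - sstar) \<le> (Df (s t) - mu (s t)) * (s_in - s t)"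
        using m1 sstar st eps by (intro mult_mono) auto
      moreover have "Dmax * \<bar>w t\<bar> < A/2" using smallD T1 t by blast
      ultimately show ?thesis using muw(1)[OF t0] unfolding Fw A_def by linarith
    qed
    obtain t1 where t1: "t1 \<ge> T1" "s t1 > sstar - \<epsilon>"
    proof (rule ccontr)
      assume "\<not> thesis"
      then have allb: "\<forall>t\<ge>T1. s t \<le> sstar - \<epsilon>" using that by force
      define L where "L = 2 * s_in / A + 1"
      have L: "L \<ge> 0" using A s_in by (simp add: L_def)
      have "s (T1 + L) \<ge> s T1 + (A/2) * ((T1 + L) - T1)"
      proof (rule linear_growth[where f' = F])
        show "continuous_on {T1..T1 + L} s" using T1 by (intro continuous_on_subset[OF cs]) auto
        show "T1 \<le> T1 + L" using L by simp
      next
        fix t assume "T1 < t" "t < T1 + L"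
        then show "(s has_real_derivative F t) (at t)" "A/2 \<le> F t"
          using dsa key1 allb T1 by (auto intro: less_imp_le)
      qed
      moreover have "s T1 \<ge> 0" using inv T1 by simp
      moreover have "(A/2) * L = s_in + A/2" using A by (simp add: L_def field_simps)
      moreover have "s (T1 + L) \<le> s_in" using inv T1 L by simp
      ultimately show False using A by simp
    qed
    have low: "s t > sstar - \<epsilon>" if t: "t \<ge> t1" for t
    proof (rule barrier_lower[where f = s and f' = F and c = t1, OF _ _ t1(2) _ t])
      show "continuous_on {t1..} s" using T1 t1 by (intro continuous_on_subset[OF cs]) auto
    next
      fix t assume "t > t1" then show "(s has_real_derivative F t) (at t)" using T1 t1 dsa by simp
    next
      fix t assume "t > t1" "s t = sstar - \<epsilon>" then show "F t > 0" using key1[of t] T1 t1 A by simp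
    qed
    have c2: "continuous_on {sstar+\<epsilon>..s_in} (\<lambda>x. mu x - Df x)"
      using eps sstar by (intro continuous_intros continuous_on_subset[OF Df_cont] continuous_on_subset[OF mu_cont]) auto
    obtain x2 where x2: "x2 \<in> {sstar+\<epsilon>..s_in}" "\<forall>y\<in>{sstar+\<epsilon>..s_in}. mu x2 - Df x2 \<le> mu y - Df y"
      using continuous_attains_inf[OF compact_Icc _ c2] eps by auto
    define m2 where "m2 = mu x2 - Df x2"
    have m2: "m2 > 0" using above[of x2] x2 eps by (auto simp: m2_def)
    define B where "B = m2 * (s_in - sstar - \<epsilon>)"
    have B: "B > 0" using m2 eps by (simp add: B_def)
    obtain T2 where T2: "T2 \<ge> 1" "\<forall>t\<ge>T2. \<bar>w t\<bar> < (B/2) / Dmax" using small[of "(B/2)/Dmax"] B Dmax by auto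
    have key2: "F t < 0" if t: "t \<ge> T2" "s t = sstar + \<epsilon>" for t
    proof -
      have t0: "t \<ge> 0" using t T2 by simp
      have st: "s t \<in> {sstar+\<epsilon>..s_in}" using eps t by auto
      have "m2 \<le> mu (s t) - Df (s t)" using x2 st by (auto simp: m2_def)
      then have "m2 * (s_in - s t) \<le> (mu (s t) - Df (s t)) * (s_in - s t)"
        using st by (intro mult_right_mono) auto
      moreover have "m2 * (s_in - s t) = B" using t by (simp add: B_def)
      moreover have "Dmax * \<bar>w t\<bar> < B/2" using smallD T2 t by blast
      ultimately show ?thesis using muw(2)[OF t0] B unfolding Fw by (simp add: algebra_simps)
    qed
    obtain t2 where t2: "t2 \<ge> T2" "s t2 < sstar + \<epsilon>"
    proof (rule ccontr)
      assume "\<not> thesis"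
      then have alla: "\<forall>t\<ge>T2. s t \<ge> sstar + \<epsilon>" using that by force
      have Gpos: "G t \<ge> m2 * b t" if t: "t \<ge> T2" for t
      proof -
        have t0: "t \<ge> 0" using t T2 by simp
        have st: "s t \<in> {sstar+\<epsilon>..s_in}" using alla t inv[OF t0] by auto
        have "m2 \<le> mu (s t) - Df (s t)" using x2 st by (auto simp: m2_def)
        then have "m2 * b t \<le> (mu (s t) - Df (s t)) * b t" using inv[OF t0] by (intro mult_right_mono) auto
        then show ?thesis by (simp add: G_def algebra_simps)
      qed
      have bmono: "b t \<ge> b T2" if t: "t \<ge> T2" for t
      proof -
        have "b T2 + 0 * (t - T2) \<le> b t"
        proof (rule linear_growth[where f' = G])
          show "continuous_on {T2..t} b" using T2 by (intro continuous_on_subset[OF cb]) auto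
          show "T2 \<le> t" using t .
        next
          fix x assume x: "T2 < x" "x < t"
          show "(b has_real_derivative G x) (at x)" using dba x T2 by simp
          have "0 \<le> m2 * b x" using m2 inv[of x] x T2 by simp
          then show "0 \<le> G x" using Gpos[of x] x by simp
        qed
        then show ?thesis by simp
      qed
      define L where "L = (s_in + (B/2)/Dmax + 1) / (m2 * b T2)"
      have bT2: "b T2 > 0" using inv T2 by simp
      have L: "L \<ge> 0" using bT2 m2 s_in B Dmax by (simp add: L_def)
      have "b (T2 + L) \<ge> b T2 + (m2 * b T2) * ((T2 + L) - T2)"
      proof (rule linear_growth[where f' = G])
        show "continuous_on {T2..T2 + L} b" using T2 by (intro continuous_on_subset[OF cb]) auto
        show "T2 \<le> T2 + L" using L by simp
      next
        fix x assume x: "T2 < x" "x < T2 + L"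
        show "(b has_real_derivative G x) (at x)" using dba x T2 by simp
        have "m2 * b T2 \<le> m2 * b x" using bmono[of x] x m2 by simp
        then show "m2 * b T2 \<le> G x" using Gpos[of x] x by simp
      qed
      moreover have "(m2 * b T2) * L = s_in + (B/2)/Dmax + 1" using m2 bT2 by (simp add: L_def)
      moreover have "b (T2 + L) \<le> s_in + \<bar>w (T2 + L)\<bar>"
        using inv[of "T2 + L"] T2 L by (simp add: w_def abs_if)
      moreover have "\<bar>w (T2 + L)\<bar> < (B/2)/Dmax" using T2 L by simp
      ultimately show False using bT2 by simp
    qed
    have up: "s t < sstar + \<epsilon>" if t: "t \<ge> t2" for t
    proof (rule barrier_upper[where f = s and f' = F and c = t2, OF _ _ t2(2) _ t])
      show "continuous_on {t2..} s" using T2 t2 by (intro continuous_on_subset[OF cs]) auto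
    next
      fix t assume "t > t2" then show "(s has_real_derivative F t) (at t)" using T2 t2 dsa by simp
    next
      fix t assume "t > t2" "s t = sstar + \<epsilon>" then show "F t < 0" using key2[of t] T2 t2 by simp
    qed
    show ?thesis
    proof (intro exI[of _ "max t1 t2"] allI impI)
      fix t assume "max t1 t2 \<le> t"
      then have "sstar - \<epsilon> < s t" "s t < sstar + \<epsilon>" using low up by auto
      then show "\<bar>s t - sstar\<bar> < \<epsilon>" by (simp add: abs_less_iff)
    qed
  qed
  show ?thesis
  proof (rule tendstoI)
    fix e :: real assume e: "e > 0"
    define \<epsilon> where "\<epsilon> = min e (min sstar (s_in - sstar)) / 2"
    have eps: "\<epsilon> > 0" "\<epsilon> < sstar" "\<epsilon> < s_in - sstar" "\<epsilon> < e" using e sstar by (auto simp: \<epsilon>_def)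
    obtain T where T: "\<forall>t\<ge>T. \<bar>s t - sstar\<bar> < \<epsilon>" using conv_eps[OF eps(1-3)] by blast
    show "eventually (\<lambda>t. dist (s t) sstar < e) at_top"
      unfolding eventually_at_top_linorder dist_real_def
    proof (intro exI[of _ T] allI impI)
      fix t assume "t \<ge> T"
      then have "\<bar>s t - sstar\<bar> < \<epsilon>" using T by blast
      then show "\<bar>s t - sstar\<bar> < e" using eps by linarith
    qed
  qed
qed


lemma sat_eq: "Dmin \<le> Dmax \<Longrightarrow> sat Dmin Dmax x = max Dmin (min Dmax x)"
  by (auto simp: sat_def max_def min_def)

theorem mainTheorem3:
  fixes s_in s_min Dmin Dmax G1 sbar :: real
    and mu mu' :: "real \<Rightarrow> real"
  assumes s_in_pos: "s_in > 0"
    and s_min: "0 < s_min" "s_min < s_in"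
    and Dminmax: "0 < Dmin" "Dmin < Dmax"
    and G1_pos: "G1 > 0"
    and sbar: "sbar \<in> {s_min..<s_in}"
    and mu_deriv: "\<And>s. s \<in> {0..s_in} \<Longrightarrow> (mu has_real_derivative mu' s) (at s within {0..s_in})"
    and mu'_cont: "continuous_on {0..s_in} mu'"
    and mu_nonneg: "\<And>s. s \<in> {0..s_in} \<Longrightarrow> mu s \<ge> 0"
    and mu0: "mu 0 = 0"
    and mu_pos: "\<And>s. s \<in> {0<..s_in} \<Longrightarrow> mu s > 0"
    and Dmin_lt: "\<And>s. s \<in> {s_min..s_in} \<Longrightarrow> Dmin < mu s"
    and Dmax_gt: "\<And>s. s \<in> {0..s_in} \<Longrightarrow> mu s < Dmax"
    and G1_mu': "\<And>s. s \<in> {0..s_in} \<Longrightarrow> G1 > - mu' s"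
    and G1_Dbar: "\<And>Dbar. Dbar \<in> {Dmin<..<Dmax} \<Longrightarrow> G1 > - (mu s_in - Dbar) / (s_in - sbar)"
  shows "\<forall>Dbar \<in> {Dmin<..<Dmax}.
           mu (s_eq s_in mu Dmin Dmax G1 sbar Dbar) = Dbar - G1 * (s_eq s_in mu Dmin Dmax G1 sbar Dbar - sbar)
         \<and> ((\<lambda>D. s_eq s_in mu Dmin Dmax G1 sbar D) has_real_derivative
              1 / (G1 + mu' (s_eq s_in mu Dmin Dmax G1 sbar Dbar))) (at Dbar)"
proof -
  have mu_cont: "continuous_on {0..s_in} mu"
    by (rule DERIV_continuous_on[where D = mu']) (rule mu_deriv)
  have mu_at: "(mu has_real_derivative mu' x) (at x)" if x: "0 < x" "x < s_in" for x
  proof -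
    have "x \<in> interior {0..s_in}" using x by simp
    then have "at x within {0..s_in} = at x" by (rule at_within_interior)
    then show ?thesis using mu_deriv[of x] x by (metis atLeastAtMost_iff less_imp_le)
  qed
  define f where "f x = mu x + G1 * x" for x
  have f_at: "(f has_real_derivative mu' x + G1) (at x)" if x: "0 < x" "x < s_in" for x
    unfolding f_def[abs_def] using mu_at[OF x] by (auto intro!: derivative_eq_intros)
  have f_cont: "continuous_on {0..s_in} f" unfolding f_def[abs_def] using mu_cont by (intro continuous_intros)
  have f_mono: "f x < f y" if xy: "0 \<le> x" "x < y" "y \<le> s_in" for x y
  proof (rule DERIV_pos_imp_increasing_open[OF xy(2)])
    fix z assume "x < z" "z < y"
    then show "\<exists>d. (f has_real_derivative d) (at z) \<and> 0 < d"
      using f_at[of z] G1_mu'[of z] xy by (intro exI[of _ "mu' z + G1"]) auto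
  next
    show "continuous_on {x..y} f" using xy by (intro continuous_on_subset[OF f_cont]) auto
  qed
  have sb: "s_min \<le> sbar" "sbar < s_in" using sbar by auto
  have root: "\<exists>r. 0 < r \<and> r < s_in \<and> f r = D + G1 * sbar" if D: "D \<in> {Dmin<..<Dmax}" for D
  proof -
    have "- (mu s_in - D) / (s_in - sbar) < G1" using G1_Dbar[OF D] .
    then have "- (mu s_in - D) < G1 * (s_in - sbar)" using sb by (simp add: divide_less_eq)
    then have hi: "D + G1 * sbar < f s_in" by (simp add: f_def algebra_simps)
    have lo: "f 0 < D + G1 * sbar" using D G1_pos sb s_min Dminmax
      by (simp add: f_def mu0 add_pos_nonneg)
    obtain r where r: "0 \<le> r" "r \<le> s_in" "f r = D + G1 * sbar"
      using IVT'[of f 0 "D + G1 * sbar" s_in] lo hi f_cont s_in_pos by auto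
    have "r \<noteq> 0" using r lo by auto
    moreover have "r \<noteq> s_in" using r hi by auto
    ultimately show ?thesis using r by (intro exI[of _ r]) auto
  qed
  have uniq: "x = y" if "x \<in> {0..s_in}" "y \<in> {0..s_in}" "f x = f y" for x y
    using f_mono[of x y] f_mono[of y x] that by (cases x y rule: linorder_cases) auto
  have seq: "s_eq s_in mu Dmin Dmax G1 sbar D = r"
    if D: "D \<in> {Dmin<..<Dmax}" and r: "0 < r" "r < s_in" "f r = D + G1 * sbar" for D r
  proof -
    define Df where "Df = dil Dmin Dmax G1 sbar D"
    have Df_eq: "Df x = max Dmin (min Dmax (D - G1 * (x - sbar)))" for x
      using Dminmax by (simp add: Df_def dil_def sat_eq)
    have Df_cont: "continuous_on UNIV Df" unfolding Df_eq[abs_def] by (intro continuous_intros)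
    have below: "mu x < Df x" if x: "0 \<le> x" "x < r" for x
    proof -
      have "f x < f r" using f_mono[of x r] x r by simp
      then have "mu x < D - G1 * (x - sbar)" using r by (simp add: f_def algebra_simps)
      moreover have "mu x < Dmax" using Dmax_gt[of x] x r by simp
      ultimately show ?thesis unfolding Df_eq by simp
    qed
    have above: "Df x < mu x" if x: "r < x" "x \<le> s_in" for x
    proof -
      have "f r < f x" using f_mono[of r x] x r by simp
      then have lt: "D - G1 * (x - sbar) < mu x" using r by (simp add: f_def algebra_simps)
      have "Dmin < mu x"
      proof (cases "D - G1 * (x - sbar) < Dmin")
        case True
        then have "G1 * (x - sbar) > 0" using D by simp
        then have "x > sbar" using G1_pos by (simp add: zero_less_mult_iff)
        then show ?thesis using Dmin_lt[of x] sb x by simp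
      next
        case False then show ?thesis using lt by simp
      qed
      moreover have "mu x < Dmax" using Dmax_gt[of x] x r by simp
      ultimately show ?thesis unfolding Df_eq using lt by simp
    qed
    have mur: "mu r = Df r"
    proof -
      have e: "mu r = D - G1 * (r - sbar)" using r by (simp add: f_def algebra_simps)
      have "mu r < Dmax" using Dmax_gt[of r] r by simp
      moreover have "D - G1 * (r - sbar) \<ge> Dmin"
      proof (rule ccontr)
        assume a: "\<not> ?thesis"
        then have "G1 * (r - sbar) > 0" using D by simp
        then have "r > sbar" using G1_pos by (simp add: zero_less_mult_iff)
        then have "Dmin < mu r" using Dmin_lt[of r] sb r by simp
        then show False using a e by simp
      qed
      ultimately show ?thesis unfolding Df_eq using e by simp
    qed
    have conv: "(s \<longlongrightarrow> r) at_top" if sol: "closed_loop_sol s_in mu Dmin Dmax G1 sbar D s b" for s b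
    proof (rule convergence[where Dmin = Dmin and Dmax = Dmax and Df = Df and b = b])
      show "s_in > 0" "Dmin > 0" "Dmin \<le> Dmax" using s_in_pos Dminmax by auto
      show "continuous_on {0..s_in} mu" by (rule mu_cont)
      show "mu 0 = 0" by (rule mu0)
      show "\<And>x. x \<in> {0..s_in} \<Longrightarrow> 0 \<le> mu x" by (rule mu_nonneg)
      show "\<And>x. x \<in> {0..s_in} \<Longrightarrow> mu x \<le> Dmax" using Dmax_gt less_imp_le by blast
      show "mu s_in > 0" using mu_pos[of s_in] s_in_pos by simp
      show "continuous_on UNIV Df" by (rule Df_cont)
      show "\<And>x. Dmin \<le> Df x" "\<And>x. Df x \<le> Dmax" using Dminmax by (auto simp: Df_eq)
      show "0 < r" "r < s_in" using r by auto
      show "\<And>x. 0 \<le> x \<Longrightarrow> x < r \<Longrightarrow> mu x < Df x" by (rule below)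
      show "\<And>x. r < x \<Longrightarrow> x \<le> s_in \<Longrightarrow> Df x < mu x" by (rule above)
      show "0 \<le> s 0" "s 0 < s_in" "b 0 > 0" using sol by (auto simp: closed_loop_sol_def)
      show "\<And>t. t \<ge> 0 \<Longrightarrow> (s has_real_derivative (- mu (s t) * b t + Df (s t) * (s_in - s t))) (at t within {0..})"
        using sol by (auto simp: closed_loop_sol_def Df_def)
      show "\<And>t. t \<ge> 0 \<Longrightarrow> (b has_real_derivative (mu (s t) * b t - Df (s t) * b t)) (at t within {0..})"
        using sol by (auto simp: closed_loop_sol_def Df_def)
    qed
    have constsol: "closed_loop_sol s_in mu Dmin Dmax G1 sbar D (\<lambda>_. r) (\<lambda>_. s_in - r)"
    proof -
      have z1: "- mu r * (s_in - r) + Df r * (s_in - r) = 0" using mur by simp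
      have z2: "mu r * (s_in - r) - Df r * (s_in - r) = 0" using mur by simp
      show ?thesis unfolding closed_loop_sol_def
        using r z1 z2 by (simp add: Df_def)
    qed
    show ?thesis unfolding s_eq_def
    proof (rule the_equality)
      show "\<forall>s b. closed_loop_sol s_in mu Dmin Dmax G1 sbar D s b \<longrightarrow> (s \<longlongrightarrow> r) at_top"
        using conv by blast
    next
      fix L assume "\<forall>s b. closed_loop_sol s_in mu Dmin Dmax G1 sbar D s b \<longrightarrow> (s \<longlongrightarrow> L) at_top"
      then have "((\<lambda>_::real. r) \<longlongrightarrow> L) at_top" using constsol by (elim allE impE) assumption+
      then show "L = r" using tendsto_const[of r "at_top::real filter"] by (metis tendsto_unique trivial_limit_at_top_linorder)
    qed
  qed
  define sE where "sE D = s_eq s_in mu Dmin Dmax G1 sbar D" for D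
  have sE: "0 < sE D \<and> sE D < s_in \<and> f (sE D) = D + G1 * sbar" if D: "D \<in> {Dmin<..<Dmax}" for D
    using root[OF D] seq[OF D] unfolding sE_def by metis
  show ?thesis
  proof (intro ballI conjI)
    fix Dbar assume Dbar: "Dbar \<in> {Dmin<..<Dmax}"
    define r where "r = sE Dbar"
    have r: "0 < r" "r < s_in" "f r = Dbar + G1 * sbar" using sE[OF Dbar] by (auto simp: r_def)
    show "mu (s_eq s_in mu Dmin Dmax G1 sbar Dbar) = Dbar - G1 * (s_eq s_in mu Dmin Dmax G1 sbar Dbar - sbar)"
      using r(3) unfolding r_def sE_def f_def by (simp add: algebra_simps)
    define g where "g x = f x - G1 * sbar" for x
    have g_at: "(g has_real_derivative mu' x + G1) (at x)" if x: "0 < x" "x < s_in" for x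
      unfolding g_def[abs_def] using f_at[OF x] by (auto intro!: derivative_eq_intros)
    have gsE: "g (sE y) = y" if "Dmin < y" "y < Dmax" for y
      using sE[of y] that by (simp add: g_def)
    have pos: "mu' r + G1 > 0" using G1_mu'[of r] r by simp
    have cont: "isCont sE Dbar"
    proof -
      have gr: "g r = Dbar" using r by (simp add: g_def)
      have "isCont g r" using g_at[OF r(1,2)] by (rule DERIV_isCont)
      then have "g \<midarrow>r\<rightarrow> Dbar" using gr by (simp add: isCont_def)
      moreover have e: "min (Dbar - Dmin) (Dmax - Dbar) > 0" using Dbar by simp
      ultimately obtain d where d: "d > 0" "\<forall>x. x \<noteq> r \<and> norm (x - r) < d \<longrightarrow> norm (g x - Dbar) < min (Dbar - Dmin) (Dmax - Dbar)"
        unfolding LIM_eq by blast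
      define \<delta> where "\<delta> = min (d/2) (min (r/2) ((s_in - r)/2))"
      have dl: "\<delta> \<le> d/2" "\<delta> \<le> r/2" "\<delta> \<le> (s_in - r)/2" unfolding \<delta>_def by linarith+
      have "\<delta> > 0" using d r by (simp add: \<delta>_def)
      then have \<delta>: "\<delta> > 0" "\<delta> < d" "0 < r - \<delta>" "r + \<delta> < s_in" using dl d r by (auto simp: field_simps)
      have inrange: "Dmin < g z \<and> g z < Dmax" if z: "r - \<delta> \<le> z" "z \<le> r + \<delta>" for z
      proof (cases "z = r")
        case True then show ?thesis using gr Dbar by simp
      next
        case False
        then have "norm (g z - Dbar) < min (Dbar - Dmin) (Dmax - Dbar)" using d z \<delta> by auto
        then show ?thesis by (auto simp: abs_less_iff)
      qed
      have "isCont sE (g r)"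
      proof (rule isCont_inverse_function2[where f = g and g = sE and x = r and a = "r - \<delta>" and b = "r + \<delta>"])
        show "r - \<delta> < r" "r < r + \<delta>" using \<delta> by auto
      next
        fix z assume z: "r - \<delta> \<le> z" "z \<le> r + \<delta>"
        have gz: "Dmin < g z" "g z < Dmax" using inrange[OF z] by auto
        have z0: "0 < z" "z < s_in" using z \<delta> by auto
        have "0 < sE (g z) \<and> sE (g z) < s_in \<and> f (sE (g z)) = g z + G1 * sbar" using sE[of "g z"] gz by simp
        then show "sE (g z) = z" using uniq[of "sE (g z)" z] z0 by (simp add: g_def)
        show "isCont g z" using g_at[OF z0] by (rule DERIV_isCont)
      qed
      then show ?thesis using gr by simp
    qed
    have "(sE has_real_derivative inverse (mu' r + G1)) (at Dbar)"
    proof (rule DERIV_inverse_function[where f = g and a = Dmin and b = Dmax])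
      show "(g has_real_derivative mu' r + G1) (at (sE Dbar))" using g_at[OF r(1,2)] by (simp add: r_def)
      show "mu' r + G1 \<noteq> 0" using pos by simp
      show "Dmin < Dbar" "Dbar < Dmax" using Dbar by auto
      show "\<And>y. Dmin < y \<Longrightarrow> y < Dmax \<Longrightarrow> g (sE y) = y" by (rule gsE)
      show "isCont sE Dbar" by (rule cont)
    qed
    then show "((\<lambda>D. s_eq s_in mu Dmin Dmax G1 sbar D) has_real_derivative
              1 / (G1 + mu' (s_eq s_in mu Dmin Dmax G1 sbar Dbar))) (at Dbar)"
      unfolding sE_def[abs_def] r_def by (simp add: inverse_eq_divide add.commute)
  qed
qed
end
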